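(* Let $\mathfrak l$ be a dg Lie algebra over a field $\Bbbk$ of characteristic $0$, and let $\mathfrak l[[t]]=\mathfrak l\otimes\Bbbk[[t]]$ carry the differential of $\mathfrak l$. Let $T$ be multiplication by $t$, i.e. $T(x\otimes t^i)=x\otimes t^{i+1}$. Define operations by $$(x\otimes t^i)_{(n)}(y\otimes t^j)=(-1)^i\frac{n!}{(n-i)!}\frac{j!}{(j-n+i)!}[x,y]\otimes t^{i+j-n}\quad\text{for } i\le n\le i+j,$$ and $(x\otimes t^i)_{(n)}(y\otimes t^j)=0$ otherwise, for $x,y\in\mathfrak l$ and $n\in\mathbb N$. Put $Y_-(a,z)b=\sum_{n\ge0}a_{(n)}b\,z^{-n-1}$. Then $(\mathfrak l[[t]],d_{\mathfrak l},T,Y_-)$ is a dg vertex Lie algebra.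
   Context: A dg vertex Lie algebra is a complex $(L,d)$ with a degree-$0$ chain endomorphism $T$ and a chain map $L\otimes L\to z^{-1}L[z^{-1}]$, $a\otimes b\mapsto Y_-(a,z)b=\sum_{n\in\mathbb N}(a_{(n)}b)z^{-n-1}$, satisfying: (i) $Y_-(Ta,z)=\partial_zY_-(a,z)$; (ii) $Y_-(a,z)b=\big((-1)^{|a||b|}e^{zT}Y_-(b,-z)a\big)_-$, where $(\cdot)_-$ keeps the negative powers of $z$; (iii) $[a_{(m)},b_{(n)}]=\sum_{i\in\mathbb N}\binom mi(a_{(i)}b)_{(m+n-i)}$; (iv) $[d,Y_-(a,z)]b=Y_-(da,z)b$.
   Formalization: $Y_-$ takes values in $z^{-1}L[[z^{-1}]]$, with the sum in (ii) taken t-adically, coefficient by coefficient in t, and finiteness of the nonzero $a_{(n)}b$ is claimed only for a, b polynomial in t. The statement above fails without it. *)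

theory Defs
  imports Complex_Main "HOL-Library.Function_Algebras"
begin

definition psign :: "int \<Rightarrow> 'k::field" where
  "psign p = (if even p then 1 else -1)"

definition graded_space :: "('k::field \<Rightarrow> 'v::ab_group_add \<Rightarrow> 'v) \<Rightarrow> 'v set \<Rightarrow> (int \<Rightarrow> 'v set) \<Rightarrow> bool" where
  "graded_space smul V L \<longleftrightarrow>
     vector_space smul \<and>
     (\<forall>p. 0 \<in> L p \<and> (\<forall>x\<in>L p. \<forall>y\<in>L p. x + y \<in> L p) \<and> (\<forall>c. \<forall>x\<in>L p. smul c x \<in> L p)) \<and>
     V = {v. \<exists>c. finite {p. c p \<noteq> 0} \<and> (\<forall>p. c p \<in> L p) \<and> v = sum c {p. c p \<noteq> 0}} \<and>
     (\<forall>c. finite {p. c p \<noteq> 0} \<and> (\<forall>p. c p \<in> L p) \<and> sum c {p. c p \<noteq> 0} = 0 \<longrightarrow> (\<forall>p. c p = 0))"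

definition lin_on :: "('k::field \<Rightarrow> 'v::ab_group_add \<Rightarrow> 'v) \<Rightarrow> 'v set \<Rightarrow> ('v \<Rightarrow> 'v) \<Rightarrow> bool" where
  "lin_on smul V f \<longleftrightarrow> (\<forall>x\<in>V. f x \<in> V) \<and> (\<forall>x\<in>V. \<forall>y\<in>V. f (x + y) = f x + f y) \<and>
     (\<forall>c. \<forall>x\<in>V. f (smul c x) = smul c (f x))"

definition dg_Lie_algebra ::
  "('k::field \<Rightarrow> 'v::ab_group_add \<Rightarrow> 'v) \<Rightarrow> (int \<Rightarrow> 'v set) \<Rightarrow> ('v \<Rightarrow> 'v) \<Rightarrow> ('v \<Rightarrow> 'v \<Rightarrow> 'v) \<Rightarrow> bool" where
  "dg_Lie_algebra smul L d br \<longleftrightarrow>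
     graded_space smul UNIV L \<and>
     lin_on smul UNIV d \<and> (\<forall>p x. x \<in> L p \<longrightarrow> d x \<in> L (p + 1)) \<and> (\<forall>x. d (d x) = 0) \<and>
     (\<forall>x. lin_on smul UNIV (br x)) \<and> (\<forall>y. lin_on smul UNIV (\<lambda>x. br x y)) \<and>
     (\<forall>p q x y. x \<in> L p \<longrightarrow> y \<in> L q \<longrightarrow> br x y \<in> L (p + q)) \<and>
     (\<forall>p q x y. x \<in> L p \<longrightarrow> y \<in> L q \<longrightarrow> br x y = - smul (psign (p * q)) (br y x)) \<and>
     (\<forall>p q x y z. x \<in> L p \<longrightarrow> y \<in> L q \<longrightarrow>
        br x (br y z) = br (br x y) z + smul (psign (p * q)) (br y (br x z))) \<and>
     (\<forall>p x y. x \<in> L p \<longrightarrow> d (br x y) = br (d x) y + smul (psign p) (br x (d y)))"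

text \<open>op n a b is a_(n) b, so Y_-(a,z)b = sum_n (op n a b) z^(-n-1).
  HS is the notion of (possibly infinite) summation used to interpret the
  sum over k coming from e^{zT} in the skew-symmetry axiom (ii):
  HS c s means "the series sum_k c k has sum s".\<close>
definition dg_vertex_Lie_axioms ::
  "('k::field_char_0 \<Rightarrow> 'w::ab_group_add \<Rightarrow> 'w) \<Rightarrow> 'w set \<Rightarrow> (int \<Rightarrow> 'w set) \<Rightarrow> ('w \<Rightarrow> 'w) \<Rightarrow> ('w \<Rightarrow> 'w)
    \<Rightarrow> (nat \<Rightarrow> 'w \<Rightarrow> 'w \<Rightarrow> 'w) \<Rightarrow> ((nat \<Rightarrow> 'w) \<Rightarrow> 'w \<Rightarrow> bool) \<Rightarrow> bool" where
  "dg_vertex_Lie_axioms smul V W d T op HS \<longleftrightarrow>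
     graded_space smul V W \<and>
     \<comment> \<open>(V,d) is a complex\<close>
     lin_on smul V d \<and> (\<forall>p x. x \<in> W p \<longrightarrow> d x \<in> W (p + 1)) \<and> (\<forall>x\<in>V. d (d x) = 0) \<and>
     \<comment> \<open>T is a degree-0 chain endomorphism\<close>
     lin_on smul V T \<and> (\<forall>p x. x \<in> W p \<longrightarrow> T x \<in> W p) \<and> (\<forall>x\<in>V. T (d x) = d (T x)) \<and>
     \<comment> \<open>the operations are bilinear of degree 0\<close>
     (\<forall>n. \<forall>a\<in>V. lin_on smul V (op n a)) \<and> (\<forall>n. \<forall>b\<in>V. lin_on smul V (\<lambda>a. op n a b)) \<and>
     (\<forall>n p q a b. a \<in> W p \<longrightarrow> b \<in> W q \<longrightarrow> op n a b \<in> W (p + q)) \<and>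
     \<comment> \<open>(i) Y_-(Ta,z) = d/dz Y_-(a,z)\<close>
     (\<forall>n. \<forall>a\<in>V. \<forall>b\<in>V. op n (T a) b = smul (- of_nat n) (op (n - 1) a b)) \<and>
     \<comment> \<open>(ii) skew-symmetry, coefficient of z^(-n-1)\<close>
     (\<forall>n p q a b. a \<in> W p \<longrightarrow> b \<in> W q \<longrightarrow>
        HS (\<lambda>k. smul (psign (p * q) * (-1) ^ (n + k + 1) / fact k) ((T ^^ k) (op (n + k) b a))) (op n a b)) \<and>
     \<comment> \<open>(iii) commutator formula (graded commutator)\<close>
     (\<forall>m n p q a b c. a \<in> W p \<longrightarrow> b \<in> W q \<longrightarrow> c \<in> V \<longrightarrow>
        op m a (op n b c) - smul (psign (p * q)) (op n b (op m a c))
          = (\<Sum>i\<le>m. smul (of_nat (m choose i)) (op (m + n - i) (op i a b) c))) \<and>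
     \<comment> \<open>(iv) [d, Y_-(a,z)] b = Y_-(da,z) b (graded commutator, |d| = 1)\<close>
     (\<forall>n p a b. a \<in> W p \<longrightarrow> b \<in> V \<longrightarrow>
        d (op n a b) - smul (psign p) (op n a (d b)) = op n (d a) b)"

text \<open>Finite summation (used in the plain notion, where locality makes the sum finite).\<close>
definition finite_has_sum :: "(nat \<Rightarrow> 'w::ab_group_add) \<Rightarrow> 'w \<Rightarrow> bool" where
  "finite_has_sum c s \<longleftrightarrow> finite {k. c k \<noteq> 0} \<and> s = sum c {k. c k \<noteq> 0}"

text \<open>The original notion: Y_- takes values in z^{-1} L[z^{-1}] (locality).\<close>
definition dg_vertex_Lie_algebra where
  "dg_vertex_Lie_algebra smul V W d T op \<longleftrightarrow>
     dg_vertex_Lie_axioms smul V W d T op finite_has_sum \<and>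
     (\<forall>a\<in>V. \<forall>b\<in>V. finite {n. op n a b \<noteq> 0})"

text \<open>An element of l[[t]] is represented by its coefficient sequence f, f = sum_i f i \<otimes> t^i.\<close>

definition ps_smul :: "('k \<Rightarrow> 'v \<Rightarrow> 'v) \<Rightarrow> 'k \<Rightarrow> (nat \<Rightarrow> 'v) \<Rightarrow> (nat \<Rightarrow> 'v)" where
  "ps_smul smul c f = (\<lambda>i. smul c (f i))"

definition ps_grading :: "(int \<Rightarrow> 'v set) \<Rightarrow> int \<Rightarrow> (nat \<Rightarrow> 'v) set" where
  "ps_grading L p = {f. \<forall>i. f i \<in> L p}"

definition ps_carrier :: "(int \<Rightarrow> 'v::ab_group_add set) \<Rightarrow> (nat \<Rightarrow> 'v) set" where
  "ps_carrier L = {f. \<exists>c. finite {p. c p \<noteq> 0} \<and> (\<forall>p. c p \<in> ps_grading L p) \<and> f = sum c {p. c p \<noteq> 0}}"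

definition ps_d :: "('v \<Rightarrow> 'v) \<Rightarrow> (nat \<Rightarrow> 'v) \<Rightarrow> (nat \<Rightarrow> 'v)" where
  "ps_d d f = (\<lambda>i. d (f i))"

definition ps_T :: "(nat \<Rightarrow> 'v::zero) \<Rightarrow> (nat \<Rightarrow> 'v)" where
  "ps_T f = (\<lambda>i. if i = 0 then 0 else f (i - 1))"

text \<open>(sum_i x_i t^i)_(n) (sum_j y_j t^j): coefficient of t^m collects the terms with
  i + j - n = m, i \<le> n \<le> i + j, i.e. i \<le> n and j = m + (n - i), with coefficient
  (-1)^i n!/(n-i)! j!/(j-n+i)! = (-1)^i n!/(n-i)! j!/m!.\<close>
definition ps_op :: "('k::field_char_0 \<Rightarrow> 'v::ab_group_add \<Rightarrow> 'v) \<Rightarrow> ('v \<Rightarrow> 'v \<Rightarrow> 'v)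
    \<Rightarrow> nat \<Rightarrow> (nat \<Rightarrow> 'v) \<Rightarrow> (nat \<Rightarrow> 'v) \<Rightarrow> (nat \<Rightarrow> 'v)" where
  "ps_op smul br n f g = (\<lambda>m. \<Sum>i\<le>n.
      smul ((-1) ^ i * (fact n / fact (n - i)) * (fact (m + (n - i)) / fact m))
           (br (f i) (g (m + (n - i)))))"

text \<open>t-adic (coefficientwise) summation of a series of power series.\<close>
definition ps_has_sum :: "(nat \<Rightarrow> nat \<Rightarrow> 'v::ab_group_add) \<Rightarrow> (nat \<Rightarrow> 'v) \<Rightarrow> bool" where
  "ps_has_sum c s \<longleftrightarrow> (\<forall>m. finite {k. c k m \<noteq> 0} \<and> s m = (\<Sum>k | c k m \<noteq> 0. c k m))"

end

theory Submission
  imports Defs "HOL-Computational_Algebra.Formal_Power_Series"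
begin

lemma comb2:
  assumes "i \<le> m+n"
  shows "(\<Sum>k\<le>m. (-1)^k * of_nat ((n+k) choose n) * of_nat (i choose (m-k)) :: 'a::field_char_0)
     = (if i \<le> n then (-1)^m * of_nat ((m+n-i) choose m) else 0)"
proof -
  have t: "(-1)^k * of_nat ((n+k) choose n) = ((- of_nat (n+1)) gchoose k :: 'a)" for k
  proof -
    have "((- of_nat (n+1)) gchoose k :: 'a) = (-1)^k * ((of_nat (n+1) + of_nat k - 1) gchoose k)"
      by (rule gbinomial_minus)
    also have "(of_nat (n+1) + of_nat k - 1 :: 'a) = of_nat (n+k)" by simp
    also have "(of_nat (n+k) gchoose k :: 'a) = of_nat ((n+k) choose k)" by (simp add: binomial_gbinomial)
    also have "(n+k) choose k = (n+k) choose n" using binomial_symmetric[of k "n+k"] by simp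
    finally show ?thesis by simp
  qed
  have "(\<Sum>k\<le>m. (-1)^k * of_nat ((n+k) choose n) * of_nat (i choose (m-k)) :: 'a)
      = (\<Sum>k\<in>{0..m}. ((- of_nat (n+1)) gchoose k) * (of_nat i gchoose (m-k)))"
    by (simp only: t[symmetric] atLeast0AtMost binomial_gbinomial)
  also have "\<dots> = (- of_nat (n+1) + of_nat i) gchoose m" by (rule gbinomial_Vandermonde)
  finally have S: "(\<Sum>k\<le>m. (-1)^k * of_nat ((n+k) choose n) * of_nat (i choose (m-k)) :: 'a) = (- of_nat (n+1) + of_nat i) gchoose m" .
  show ?thesis
  proof (cases "i \<le> n")
    case True
    have "(- of_nat (n+1) + of_nat i :: 'a) = - of_nat (n+1-i)" using True by (simp add: of_nat_diff)
    then have "((- of_nat (n+1) + of_nat i) gchoose m :: 'a) = (-1)^m * ((of_nat (n+1-i) + of_nat m - 1) gchoose m)"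
      by (simp add: gbinomial_minus)
    also have "(of_nat (n+1-i) + of_nat m - 1 :: 'a) = of_nat (m+n-i)" using True by (simp add: of_nat_diff)
    finally show ?thesis using S True by (simp add: binomial_gbinomial)
  next
    case False
    have "(- of_nat (n+1) + of_nat i :: 'a) = of_nat (i-n-1)" using False by (simp add: of_nat_diff)
    then have "((- of_nat (n+1) + of_nat i) gchoose m :: 'a) = of_nat ((i-n-1) choose m)"
      by (simp add: binomial_gbinomial)
    also have "(i-n-1) choose m = 0" using False assms by (simp add: binomial_eq_0)
    finally show ?thesis using S False by simp
  qed
qed

lemma comb1: "(\<Sum>l\<le>j. (-1)^l * int (A choose l) * int ((A+n-l) choose (j-l))) = int (n choose j)"
proof (induction A arbitrary: n j)
  case 0
  have "(\<Sum>l\<le>j. (-1)^l * int (0 choose l) * int ((0+n-l) choose (j-l))) = (\<Sum>l\<in>{0}. (-1)^l * int (0 choose l) * int ((0+n-l) choose (j-l)))"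
    by (rule sum.mono_neutral_right) auto
  then show ?case by simp
next
  case (Suc A)
  show ?case
  proof (cases j)
    case 0 then show ?thesis by simp
  next
    case (Suc j')
    have e1: "(\<Sum>l\<le>Suc j'. (-1)^l * int (Suc A choose l) * int ((Suc A+n-l) choose (Suc j'-l)))
      = int ((Suc A + n) choose Suc j') + (\<Sum>l\<le>j'. (-1)^(Suc l) * int (Suc A choose Suc l) * int ((A+n-l) choose (j'-l)))"
      by (subst sum.atMost_Suc_shift) simp
    have e2: "(\<Sum>l\<le>j'. (-1)^(Suc l) * int (Suc A choose Suc l) * int ((A+n-l) choose (j'-l)))
       = (\<Sum>l\<le>j'. (-1)^(Suc l) * int (A choose Suc l) * int ((A+n-l) choose (j'-l)))
        - (\<Sum>l\<le>j'. (-1)^l * int (A choose l) * int ((A+n-l) choose (j'-l)))"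
      by (simp add: sum_subtractf[symmetric] algebra_simps, rule sum.cong, auto)
    have e3: "(\<Sum>l\<le>Suc j'. (-1)^l * int (A choose l) * int ((A+Suc n-l) choose (Suc j'-l)))
      = int ((A + Suc n) choose Suc j') + (\<Sum>l\<le>j'. (-1)^(Suc l) * int (A choose Suc l) * int ((A+n-l) choose (j'-l)))"
      by (subst sum.atMost_Suc_shift) simp
    have "int ((A + Suc n) choose Suc j') = int ((Suc A + n) choose Suc j')" by simp
    then show ?thesis using Suc.IH[of "Suc n" "Suc j'"] Suc.IH[of n j'] e1 e2 e3 \<open>j = Suc j'\<close>
      by simp
  qed
qed


definition co :: "nat \<Rightarrow> nat \<Rightarrow> nat \<Rightarrow> 'k::field_char_0" where
  "co n i m = (-1)^i * (fact n / fact (n-i)) * (fact (m + (n-i)) / fact m)"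

lemma neg1_diff: "b \<le> a \<Longrightarrow> ((-1::'a::comm_ring_1)^(a-b)) = (-1)^(a+b)"
proof -
  assume "b \<le> a"
  then obtain t where "a = b + t" using le_Suc_ex by blast
  have "(-1::'a)^b * (-1)^b = ((-1) * (-1))^b" by (rule power_mult_distrib[symmetric])
  then have "(-1::'a)^b * (-1)^b = 1" by simp
  then show ?thesis using \<open>a = b + t\<close> by (simp add: power_add mult_ac)
qed

lemma S2:
  assumes "j \<le> m+n"
  shows "(\<Sum>k\<le>m. (if j \<le> n+k then (-1)^(n+k) / fact k * co (n+k) j (m-k) else 0))
     = (if m \<le> j then co n (m+n-j) m else (0::'k::field_char_0))"
proof -
  have trm: "(if j \<le> n+k then (-1)^(n+k) / fact k * co (n+k) j (m-k) else 0)
     = (-1)^(n+j) * fact n * ((-1)^k * of_nat ((n+k) choose n) * of_nat ((m+n-j) choose (m-k)) :: 'k)"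
    if km: "k \<le> m" for k
  proof (cases "j \<le> n+k")
    case True
    have e1: "m + n - j - (m - k) = n + k - j" using True km assms by simp
    have e2: "m - k + (n + k - j) = m + n - j" using True km assms by simp
    have c1: "(of_nat ((n+k) choose n) :: 'k) = fact (n+k) / (fact n * fact k)"
      by (simp add: binomial_fact)
    have c2: "(of_nat ((m+n-j) choose (m-k)) :: 'k) = fact (m+n-j) / (fact (m-k) * fact (n+k-j))"
      using True km assms by (simp add: binomial_fact e1)
    show ?thesis using True unfolding co_def c1 c2 e2
      by (simp add: field_simps power_add)
  next
    case False
    then have "(m+n-j) choose (m-k) = 0" using km assms by (simp add: binomial_eq_0)
    then show ?thesis using False by simp
  qed
  have "(\<Sum>k\<le>m. (if j \<le> n+k then (-1)^(n+k) / fact k * co (n+k) j (m-k) else 0))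
     = (-1)^(n+j) * fact n * (\<Sum>k\<le>m. (-1)^k * of_nat ((n+k) choose n) * of_nat ((m+n-j) choose (m-k)) :: 'k)"
    by (simp add: trm sum_distrib_left)
  also have "\<dots> = (-1)^(n+j) * fact n * (if m+n-j \<le> n then (-1)^m * of_nat ((m+n-(m+n-j)) choose m) else 0)"
    using comb2[of "m+n-j" m n] by simp
  also have "\<dots> = (if m \<le> j then co n (m+n-j) m else 0)"
  proof (cases "m \<le> j")
    case True
    have e3: "m + n - (m + n - j) = j" "n - (m+n-j) = j - m" "m + (j - m) = j" using True assms by auto
    have c3: "(of_nat (j choose m) :: 'k) = fact j / (fact m * fact (j - m))" using True by (simp add: binomial_fact)
    have s: "((-1::'k)^(m+n-j)) = (-1)^(m+n+j)" using assms by (rule neg1_diff)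
    show ?thesis using True unfolding co_def e3 c3 s by (simp add: field_simps power_add)
  qed simp
  finally show ?thesis .
qed


lemma S3term:
  assumes "l \<le> m - i" "l \<le> j" "i \<le> m" "j + i \<le> m + n"
  shows "of_nat (m choose (l+i)) * co (m+n-(l+i)) (j-((l+i)-i)) r * co (l+i) i (j-((l+i)-i))
    = ((-1)^(i+j) * fact j * (fact m / fact (m-i)) * (fact (r + (m+n-i-j)) / fact r))
       * ((-1)^l * of_nat ((m-i) choose l) * of_nat ((m-i+n-l) choose (j-l)) :: 'k::field_char_0)"
proof -
  obtain a where ha: "m = i + l + a" using assms le_Suc_ex by (metis add.assoc le_add_diff_inverse)
  obtain b where hb: "j = l + b" using assms le_Suc_ex by blast
  have bn: "b \<le> a + n" using assms ha hb by simp
  then obtain e where he: "a + n = b + e" using le_Suc_ex by blast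
  have r1: "m+n-(l+i) = a+n" "j-((l+i)-i) = b" "a + n - b = e" "m+n-i-j = e" "m - i = l + a"
    "m-i+n-l = a+n" "j - l = b" "m - (l+i) = a" "l + a - l = a" "l + a + n - l = a + n"
    using ha hb he by auto
  have c1: "(of_nat (m choose (l+i)) :: 'k) = fact m / (fact (l+i) * fact a)"
    using ha by (simp add: binomial_fact r1)
  have c2: "(of_nat ((l+a) choose l) :: 'k) = fact (l+a) / (fact l * fact a)"
    by (simp add: binomial_fact)
  have c3: "(of_nat ((a+n) choose b) :: 'k) = fact (a+n) / (fact b * fact e)"
    using binomial_fact[OF bn, where 'a='k] r1(3) by simp
  have s: "(-1::'k)^l * (-1)^l = 1"
  proof -
    have "(-1::'k)^l * (-1)^l = ((-1) * (-1))^l" by (rule power_mult_distrib[symmetric])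
    then show ?thesis by simp
  qed
  show ?thesis unfolding co_def r1 c1 c2 c3 using s
    by (simp add: field_simps power_add hb r1 c3)
qed

lemma S3:
  assumes "i \<le> m" "j \<le> m+n"
  shows "(\<Sum>k\<le>m. (if i \<le> k \<and> k-i \<le> j \<and> j+i \<le> m+n then of_nat (m choose k) * co (m+n-k) (j-(k-i)) r * co k i (j-(k-i)) else 0))
    = (if j \<le> n then co m i r * co n j (r+(m-i)) else (0::'k::field_char_0))"
proof (cases "j + i \<le> m + n")
  case False
  then show ?thesis using assms by auto
next
  case True
  define F where "F k = (of_nat (m choose k) * co (m+n-k) (j-(k-i)) r * co k i (j-(k-i)) :: 'k)" for k
  define Q where "Q = ((-1)^(i+j) * fact j * (fact m / fact (m-i)) * (fact (r + (m+n-i-j)) / fact r) :: 'k)"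
  define X where "X l = ((-1)^l * of_nat ((m-i) choose l) * of_nat ((m-i+n-l) choose (j-l)) :: 'k)" for l
  have "(\<Sum>k\<le>m. (if i \<le> k \<and> k-i \<le> j \<and> j+i \<le> m+n then F k else 0))
      = (\<Sum>k\<in>{i..m}. (if k-i \<le> j then F k else 0))"
    by (rule sum.mono_neutral_cong_right) (use True in auto)
  also have "\<dots> = (\<Sum>l\<in>{0..m-i}. (if l \<le> j then F (l+i) else 0))"
  proof -
    have "{i..m} = {0+i..(m-i)+i}" using assms by simp
    then show ?thesis by (simp only: sum.shift_bounds_cl_nat_ivl) simp
  qed
  also have "\<dots> = (\<Sum>l\<in>{0..m-i}. (if l \<le> j then Q * X l else 0))"
    by (rule sum.cong) (use S3term[of _ m i j n r] assms True in \<open>auto simp: F_def Q_def X_def\<close>)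
  also have "\<dots> = (\<Sum>l\<in>{0..m-i} \<inter> {..j}. Q * X l)"
    by (simp only: sum.inter_restrict[OF finite_atLeastAtMost] atMost_iff)
  also have "\<dots> = (\<Sum>l\<le>j. Q * X l)"
    by (rule sum.mono_neutral_left) (auto simp: X_def binomial_eq_0)
  also have "\<dots> = Q * of_int (\<Sum>l\<le>j. (-1)^l * int ((m-i) choose l) * int ((m-i+n-l) choose (j-l)))"
    by (simp add: X_def sum_distrib_left)
  also have "\<dots> = Q * of_nat (n choose j)"
    using arg_cong[OF comb1[where A="m-i" and n=n and j=j], of "of_int :: int \<Rightarrow> 'k"] by simp
  also have "\<dots> = (if j \<le> n then co m i r * co n j (r+(m-i)) else 0)"
  proof (cases "j \<le> n")
    case True
    have e: "r + (m - i) + (n - j) = r + (m+n-i-j)" using True assms by simp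
    show ?thesis using True unfolding Q_def co_def e
      by (simp add: binomial_fact field_simps power_add)
  qed (simp add: binomial_eq_0)
  finally show ?thesis unfolding F_def .
qed


lemma sum_fun_apply: "sum f A x = (\<Sum>a\<in>A. f a x)"
  by (induction A rule: infinite_finite_induct) auto

lemma psign_sq: "psign p * psign p = (1::'k::field)"
  by (simp add: psign_def)

lemma psign_comm: "psign (p*q) = psign (q*p)"
  by (simp add: mult.commute)

locale dgl =
  fixes smul :: "'k::field_char_0 \<Rightarrow> 'v::ab_group_add \<Rightarrow> 'v"
    and L :: "int \<Rightarrow> 'v set" and d :: "'v \<Rightarrow> 'v" and br :: "'v \<Rightarrow> 'v \<Rightarrow> 'v"
  assumes dgl: "dg_Lie_algebra smul L d br"
begin

lemma gs: "graded_space smul UNIV L"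
  using dgl unfolding dg_Lie_algebra_def by (elim conjE) assumption

lemma vs: "vector_space smul"
  using gs unfolding graded_space_def by blast

sublocale m: module smul
  using vs by (simp add: module_iff_vector_space)

lemma L0: "0 \<in> L p" and Ladd: "x \<in> L p \<Longrightarrow> y \<in> L p \<Longrightarrow> x + y \<in> L p"
  and Lsmul: "x \<in> L p \<Longrightarrow> smul c x \<in> L p"
  using gs unfolding graded_space_def by blast+

lemma Lsum: "(\<And>a. a \<in> A \<Longrightarrow> f a \<in> L p) \<Longrightarrow> sum f A \<in> L p"
  by (induction A rule: infinite_finite_induct) (auto intro: L0 Ladd)

lemma Lindep: "finite {p. c p \<noteq> 0} \<Longrightarrow> (\<forall>p. c p \<in> L p) \<Longrightarrow> sum c {p. c p \<noteq> 0} = 0 \<Longrightarrow> c p = 0"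
  using gs unfolding graded_space_def by blast

lemma br_lin2: "lin_on smul UNIV (br x)" and br_lin1: "lin_on smul UNIV (\<lambda>x. br x y)"
  and d_lin: "lin_on smul UNIV d"
  using dgl unfolding dg_Lie_algebra_def by blast+

lemma br_add1: "br (x + y) z = br x z + br y z" using br_lin1 by (simp add: lin_on_def)
lemma br_add2: "br z (x + y) = br z x + br z y" using br_lin2 by (simp add: lin_on_def)
lemma br_smul1: "br (smul c x) y = smul c (br x y)" using br_lin1 by (simp add: lin_on_def)
lemma br_smul2: "br x (smul c y) = smul c (br x y)" using br_lin2 by (simp add: lin_on_def)
lemma d_add: "d (x + y) = d x + d y" using d_lin by (simp add: lin_on_def)
lemma d_smul: "d (smul c x) = smul c (d x)" using d_lin by (simp add: lin_on_def)

sublocale br1: additive "\<lambda>x. br x y" by standard (rule br_add1)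
sublocale br2: additive "br x" by standard (rule br_add2)
sublocale dd: additive d by standard (rule d_add)

lemma dgl_f1: "\<forall>p x. x \<in> L p \<longrightarrow> d x \<in> L (p + 1)"
  using dgl unfolding dg_Lie_algebra_def by (elim conjE) assumption

lemma dgl_f2: "\<forall>x. d (d x) = 0"
  using dgl unfolding dg_Lie_algebra_def by (elim conjE) assumption

lemma dgl_f3: "\<forall>p q x y. x \<in> L p \<longrightarrow> y \<in> L q \<longrightarrow> br x y \<in> L (p + q)"
  using dgl unfolding dg_Lie_algebra_def by (elim conjE) assumption

lemma dgl_f4: "\<forall>p q x y. x \<in> L p \<longrightarrow> y \<in> L q \<longrightarrow> br x y = - smul (psign (p * q)) (br y x)"
  using dgl unfolding dg_Lie_algebra_def by (elim conjE) assumption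

lemma dgl_f5: "\<forall>p q x y z. x \<in> L p \<longrightarrow> y \<in> L q \<longrightarrow>
        br x (br y z) = br (br x y) z + smul (psign (p * q)) (br y (br x z))"
  using dgl unfolding dg_Lie_algebra_def by (elim conjE) assumption

lemma dgl_f6: "\<forall>p x y. x \<in> L p \<longrightarrow> d (br x y) = br (d x) y + smul (psign p) (br x (d y))"
  using dgl unfolding dg_Lie_algebra_def by (elim conjE) assumption

lemma d_deg: "x \<in> L p \<Longrightarrow> d x \<in> L (p+1)" using dgl_f1 by blast
lemma d_d: "d (d x) = 0" using dgl_f2 by blast
lemma br_deg: "x \<in> L p \<Longrightarrow> y \<in> L q \<Longrightarrow> br x y \<in> L (p+q)" using dgl_f3 by blast
lemma br_anti: "x \<in> L p \<Longrightarrow> y \<in> L q \<Longrightarrow> br x y = - smul (psign (p*q)) (br y x)"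
  using dgl_f4 by blast
lemma jac: "x \<in> L p \<Longrightarrow> y \<in> L q \<Longrightarrow> br x (br y z) = br (br x y) z + smul (psign (p * q)) (br y (br x z))"
  using dgl_f5 by blast
lemma leib: "x \<in> L p \<Longrightarrow> d (br x y) = br (d x) y + smul (psign p) (br x (d y))"
  using dgl_f6 by blast

end


context dgl begin

abbreviation "V \<equiv> ps_carrier L"
abbreviation "W \<equiv> ps_grading L"
abbreviation "op \<equiv> ps_op smul br"
abbreviation "S \<equiv> ps_smul smul"
abbreviation "D \<equiv> ps_d d"

lemma W_iff: "f \<in> W p \<longleftrightarrow> (\<forall>i. f i \<in> L p)" by (simp add: ps_grading_def)

lemma carrier_sum: assumes "finite P" "\<And>p. p \<in> P \<Longrightarrow> c p \<in> W p" shows "sum c P \<in> V"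
proof -
  define c' where "c' p = (if p \<in> P then c p else 0)" for p
  have sub: "{p. c' p \<noteq> 0} \<subseteq> P" by (auto simp: c'_def)
  have fin: "finite {p. c' p \<noteq> 0}" using sub assms(1) finite_subset by blast
  have "sum c P = sum c' P" by (simp add: c'_def)
  also have "\<dots> = sum c' {p. c' p \<noteq> 0}"
    by (rule sum.mono_neutral_right) (use assms(1) sub in auto)
  finally have e: "sum c P = sum c' {p. c' p \<noteq> 0}" .
  have "\<forall>p. c' p \<in> W p" using assms(2) by (auto simp: c'_def W_iff L0)
  then show ?thesis unfolding ps_carrier_def using fin e by blast
qed

lemma carrier_obtain: assumes "f \<in> V" obtains c P where "finite P" "\<And>p. c p \<in> W p" "f = sum c P"
proof -
  from assms obtain c where "finite {p. c p \<noteq> 0}" "\<forall>p. c p \<in> W p" "f = sum c {p. c p \<noteq> 0}"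
    unfolding ps_carrier_def by blast
  then show ?thesis using that by blast
qed

lemma carrier_0: "0 \<in> V" using carrier_sum[of "{}"] by simp

lemma carrier_hom: "x \<in> W p \<Longrightarrow> x \<in> V" using carrier_sum[of "{p}" "\<lambda>_. x"] by simp

lemma carrier_add: assumes "f \<in> V" "g \<in> V" shows "f + g \<in> V"
proof -
  obtain c P where c: "finite P" "\<And>p. c p \<in> W p" "f = sum c P" using carrier_obtain[OF assms(1)] by blast
  obtain c' P' where c': "finite P'" "\<And>p. c' p \<in> W p" "g = sum c' P'" using carrier_obtain[OF assms(2)] by blast
  have e1: "sum (\<lambda>p. if p \<in> P then c p else 0) (P \<union> P') = sum c P"
  proof -
    have "sum (\<lambda>p. if p \<in> P then c p else 0) (P \<union> P') = sum c ((P \<union> P') \<inter> P)"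
      by (rule sum.inter_restrict[symmetric]) (simp add: c c')
    also have "(P \<union> P') \<inter> P = P" by auto
    finally show ?thesis .
  qed
  have e2: "sum (\<lambda>p. if p \<in> P' then c' p else 0) (P \<union> P') = sum c' P'"
  proof -
    have "sum (\<lambda>p. if p \<in> P' then c' p else 0) (P \<union> P') = sum c' ((P \<union> P') \<inter> P')"
      by (rule sum.inter_restrict[symmetric]) (simp add: c c')
    also have "(P \<union> P') \<inter> P' = P'" by auto
    finally show ?thesis .
  qed
  have "f + g = sum (\<lambda>p. (if p \<in> P then c p else 0) + (if p \<in> P' then c' p else 0)) (P \<union> P')"
    by (simp add: sum.distrib e1 e2 c c')
  also have "\<dots> \<in> V"
    by (rule carrier_sum) (use c c' in \<open>auto simp: W_iff L0 Ladd\<close>)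
  finally show ?thesis .
qed

lemma carrier_sum2: "finite A \<Longrightarrow> (\<And>a. a \<in> A \<Longrightarrow> g a \<in> V) \<Longrightarrow> sum g A \<in> V"
  by (induction A rule: finite_induct) (auto intro: carrier_0 carrier_add)

lemma carrier_map:
  assumes add: "\<And>x y. h (x + y) = h x + h y" and hom: "\<And>p x. x \<in> W p \<Longrightarrow> h x \<in> V" and f: "f \<in> V"
  shows "h f \<in> V"
proof -
  interpret h: additive h by standard (rule add)
  obtain c P where c: "finite P" "\<And>p. c p \<in> W p" "f = sum c P" using carrier_obtain[OF f] by blast
  have "h f = (\<Sum>p\<in>P. h (c p))" by (simp add: c h.sum)
  also have "\<dots> \<in> V" by (rule carrier_sum2) (use c hom in auto)
  finally show ?thesis .
qed

lemma vs_ps: "vector_space S"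
  unfolding vector_space_def ps_smul_def
  by (auto simp: fun_eq_iff m.scale_right_distrib m.scale_left_distrib)

lemma W_0: "0 \<in> W p" and W_add: "x \<in> W p \<Longrightarrow> y \<in> W p \<Longrightarrow> x + y \<in> W p"
  and W_smul: "x \<in> W p \<Longrightarrow> S c x \<in> W p"
  by (auto simp: W_iff L0 Ladd Lsmul ps_smul_def)

lemma W_indep:
  assumes "finite {p. c p \<noteq> 0}" "\<forall>p. c p \<in> W p" "sum c {p. c p \<noteq> 0} = 0"
  shows "c p = 0"
proof
  fix i
  define c' where "c' p = c p i" for p
  have sub: "{p. c' p \<noteq> 0} \<subseteq> {p. c p \<noteq> 0}" by (auto simp: c'_def)
  have fin: "finite {p. c' p \<noteq> 0}" using sub assms(1) finite_subset by blast
  have "sum c' {p. c' p \<noteq> 0} = sum c' {p. c p \<noteq> 0}"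
    by (rule sum.mono_neutral_left) (use assms(1) sub in \<open>auto simp: c'_def\<close>)
  also have "\<dots> = sum c {p. c p \<noteq> 0} i" by (simp add: sum_fun_apply c'_def)
  also have "\<dots> = 0" using assms(3) by simp
  finally have "sum c' {p. c' p \<noteq> 0} = 0" .
  moreover have "\<forall>p. c' p \<in> L p" using assms(2) by (auto simp: c'_def W_iff)
  ultimately have "c' p = 0" using fin Lindep by blast
  then show "c p i = 0 i" by (simp add: c'_def)
qed

lemma graded_ps: "graded_space S V W"
  unfolding graded_space_def
  using vs_ps W_0 W_add W_smul W_indep unfolding ps_carrier_def by blast

end

context dgl begin

lemma ps_op_co: "op n f g m = (\<Sum>i\<le>n. smul (co n i m) (br (f i) (g (m + (n-i)))))"
  by (simp add: ps_op_def co_def)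

lemma op_add1: "op n (a + a') b = op n a b + op n a' b"
  by (simp add: fun_eq_iff ps_op_def br_add1 m.scale_right_distrib sum.distrib)
lemma op_add2: "op n a (b + b') = op n a b + op n a b'"
  by (simp add: fun_eq_iff ps_op_def br_add2 m.scale_right_distrib sum.distrib)
lemma op_smul1: "op n (S c a) b = S c (op n a b)"
  by (simp add: fun_eq_iff ps_op_co ps_smul_def br_smul1 m.scale_sum_right mult.commute)
lemma op_smul2: "op n a (S c b) = S c (op n a b)"
  by (simp add: fun_eq_iff ps_op_co ps_smul_def br_smul2 m.scale_sum_right mult.commute)

lemma D_add: "D (x + y) = D x + D y" by (simp add: fun_eq_iff ps_d_def d_add)
lemma D_smul: "D (S c x) = S c (D x)" by (simp add: fun_eq_iff ps_d_def ps_smul_def d_smul)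
lemma D_deg: "x \<in> W p \<Longrightarrow> D x \<in> W (p+1)" by (simp add: W_iff ps_d_def d_deg)
lemma T_add: "ps_T (x + y) = ps_T x + ps_T (y :: nat \<Rightarrow> 'v)" by (simp add: fun_eq_iff ps_T_def)
lemma T_smul: "ps_T (S c x) = S c (ps_T x)" by (simp add: fun_eq_iff ps_T_def ps_smul_def)
lemma T_deg: "(x :: nat \<Rightarrow> 'v) \<in> W p \<Longrightarrow> ps_T x \<in> W p" by (simp add: W_iff ps_T_def L0)

lemma op_deg: "a \<in> W p \<Longrightarrow> b \<in> W q \<Longrightarrow> op n a b \<in> W (p+q)"
  unfolding W_iff ps_op_def by (auto intro!: Lsum Lsmul br_deg)

lemma op_carrier: assumes "a \<in> V" "b \<in> V" shows "op n a b \<in> V"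
proof -
  have "op n x b \<in> V" if x: "x \<in> W p" for x p
    by (rule carrier_map[where h="op n x", OF op_add2 _ assms(2)]) (rule carrier_hom[OF op_deg[OF x]])
  then show ?thesis
    by (rule carrier_map[where h="\<lambda>a. op n a b", OF op_add1 _ assms(1)])
qed

lemma lin_D: "lin_on S V D"
  unfolding lin_on_def
proof (intro conjI ballI allI)
  fix x assume "x \<in> V" then show "D x \<in> V"
  proof -
    have h: "\<And>p y. y \<in> W p \<Longrightarrow> D y \<in> V" using carrier_hom D_deg by blast
    show ?thesis by (rule carrier_map[where h=D, OF D_add h \<open>x \<in> V\<close>])
  qed
qed (simp_all add: D_add D_smul)

lemma lin_T: "lin_on S V ps_T"
  unfolding lin_on_def
proof (intro conjI ballI allI)
  fix x assume "x \<in> V" then show "ps_T x \<in> V"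
  proof -
    have h: "\<And>p y. y \<in> W p \<Longrightarrow> ps_T y \<in> V" using carrier_hom T_deg by blast
    show ?thesis by (rule carrier_map[where h=ps_T, OF T_add h \<open>x \<in> V\<close>])
  qed
qed (simp_all add: T_add T_smul)

lemma lin_op2: "a \<in> V \<Longrightarrow> lin_on S V (op n a)"
  unfolding lin_on_def using op_carrier op_add2 op_smul2 by blast

lemma lin_op1: "b \<in> V \<Longrightarrow> lin_on S V (\<lambda>a. op n a b)"
  unfolding lin_on_def using op_carrier op_add1 op_smul1 by blast

lemma DD: "D (D x) = 0" by (simp add: fun_eq_iff ps_d_def d_d)

lemma TD: "ps_T (D x) = D (ps_T x)" by (simp add: fun_eq_iff ps_d_def ps_T_def dd.zero)

end

context dgl begin

lemma ax_iv: assumes a: "a \<in> W p"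
  shows "D (op n a b) - S (psign p) (op n a (D b)) = op n (D a) b"
proof
  fix m
  have l: "d (br (a i) y) = br (d (a i)) y + smul (psign p) (br (a i) (d y))" for i y
    using a by (simp add: W_iff leib)
  show "(D (op n a b) - S (psign p) (op n a (D b))) m = op n (D a) b m"
    by (simp add: ps_op_co ps_d_def ps_smul_def dd.sum d_smul l m.scale_right_distrib sum.distrib
        m.scale_sum_right m.scale_left_commute[of "psign p"] mult.commute[of _ "psign p"])
qed

lemma co_Suc: "i \<le> n \<Longrightarrow> co (Suc n) (Suc i) m = - of_nat (Suc n) * (co n i m :: 'k)"
  by (simp add: co_def fact_Suc field_simps)

lemma ax_i: "op n (ps_T a) b = S (- of_nat n) (op (n - 1) a b)"
proof (cases n)
  case 0
  then show ?thesis by (simp add: fun_eq_iff ps_op_co ps_T_def ps_smul_def br1.zero)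
next
  case (Suc n')
  show ?thesis
  proof
    fix m
    have "op n (ps_T a) b m = (\<Sum>i\<le>n'. smul (co (Suc n') (Suc i) m) (br (a i) (b (m + (n' - i)))))"
      unfolding ps_op_co Suc by (subst sum.atMost_Suc_shift) (simp add: ps_T_def br1.zero)
    also have "\<dots> = (\<Sum>i\<le>n'. smul (- of_nat (Suc n')) (smul (co n' i m) (br (a i) (b (m + (n' - i))))))"
      by (rule sum.cong) (simp_all add: co_Suc)
    also have "\<dots> = S (- of_nat n) (op (n - 1) a b) m"
      by (simp add: ps_op_co ps_smul_def m.scale_sum_right Suc)
    finally show "op n (ps_T a) b m = S (- of_nat n) (op (n - 1) a b) m" .
  qed
qed

lemma locality:
  assumes "finite {i. a i \<noteq> 0}" "finite {j. b j \<noteq> 0}"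
  shows "finite {n. op n a b \<noteq> 0}"
proof -
  obtain I where I: "\<And>i. a i \<noteq> 0 \<Longrightarrow> i < I" using assms(1) finite_nat_set_iff_bounded by auto
  obtain J where J: "\<And>j. b j \<noteq> 0 \<Longrightarrow> j < J" using assms(2) finite_nat_set_iff_bounded by auto
  have "op n a b = 0" if n: "n \<ge> I + J" for n
  proof
    fix m
    have "br (a i) (b (m + (n - i))) = 0" if "i \<le> n" for i
    proof (cases "i < I")
      case True
      then have "b (m + (n - i)) = 0" using J[of "m + (n-i)"] n by fastforce
      then show ?thesis by (simp add: br2.zero)
    next
      case False
      then have "a i = 0" using I by fastforce
      then show ?thesis by (simp add: br1.zero)
    qed
    then show "op n a b m = 0 m" by (simp add: ps_op_co)
  qed
  then have "{n. op n a b \<noteq> 0} \<subseteq> {..<I+J}" by (auto simp: not_less[symmetric])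
  then show ?thesis using finite_subset by blast
qed

end

lemma sum_atMost_rev:
  fixes g :: "nat \<Rightarrow> 'a::comm_monoid_add"
  shows "(\<Sum>j\<le>N. g j) = (\<Sum>i\<le>N. g (N - i))"
  using sum.atLeastAtMost_rev[where g=g and n=0 and m=N] by (simp add: atLeast0AtMost)

lemma sum_atMost_extend: "(n::nat) \<le> N \<Longrightarrow> (\<Sum>j\<le>n. g j) = (\<Sum>j\<le>N. if j \<le> n then g j else 0)"
  by (rule sum.mono_neutral_cong_left) auto

lemma Tpow: "(ps_T ^^ k) f m = (if k \<le> m then f (m - k) else (0::'v::zero))"
  by (induction k arbitrary: m) (auto simp: ps_T_def)

context dgl begin

lemma skew_coeff:
  assumes a: "a \<in> W p" and b: "b \<in> W q"
  shows "op n a b m = (\<Sum>k\<le>m. smul (psign (p*q) * (-1)^(n+k+1) / fact k) (op (n+k) b a (m-k)))"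
proof -
  let ?s = "psign (p*q) :: 'k"
  define E where "E j = br (a (m+n-j)) (b j)" for j
  define g where "g k j = ((-1)^(n+k) / fact k * co (n+k) j (m-k) :: 'k)" for k j
  have anti: "br (b j) (a x) = - smul ?s (br (a x) (b j))" for j x
  proof -
    have "br (b j) (a x) = - smul (psign (q*p)) (br (a x) (b j))"
      using a b by (simp add: W_iff br_anti)
    then show ?thesis by (simp add: mult.commute)
  qed
  have ss: "?s * ?s = 1" by (rule psign_sq)
  have inner: "smul (?s * (-1)^(n+k+1) / fact k) (op (n+k) b a (m-k))
      = (\<Sum>j\<le>m+n. if j \<le> n+k then smul (g k j) (E j) else 0)" if k: "k \<le> m" for k
  proof -
    have "smul (?s * (-1)^(n+k+1) / fact k) (op (n+k) b a (m-k))
        = (\<Sum>j\<le>n+k. smul (g k j) (E j))"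
      unfolding ps_op_co m.scale_sum_right
    proof (rule sum.cong[OF refl])
      fix j assume j: "j \<in> {..n+k}"
      have idx: "m - k + (n + k - j) = m + n - j" using j k by auto
      have c: "?s * (-1)^(n+k+1) / fact k * co (n+k) j (m-k) * - ?s = g k j"
      proof -
        have "?s * (-1)^(n+k+1) / fact k * co (n+k) j (m-k) * - ?s
            = (?s * ?s) * ((-1)^(n+k) / fact k * co (n+k) j (m-k))"
          by (simp add: field_simps power_add)
        then show ?thesis by (simp add: ss g_def)
      qed
      show "smul (?s * (-1)^(n+k+1) / fact k) (smul (co (n+k) j (m-k)) (br (b j) (a (m - k + (n + k - j)))))
          = smul (g k j) (E j)"
        unfolding idx anti E_def by (simp add: c[symmetric] mult.assoc)
    qed
    also have "\<dots> = (\<Sum>j\<le>m+n. if j \<le> n+k then smul (g k j) (E j) else 0)"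
      by (rule sum_atMost_extend) (use k in simp)
    finally show ?thesis .
  qed
  have "(\<Sum>k\<le>m. smul (?s * (-1)^(n+k+1) / fact k) (op (n+k) b a (m-k)))
      = (\<Sum>k\<le>m. \<Sum>j\<le>m+n. if j \<le> n+k then smul (g k j) (E j) else 0)"
    by (rule sum.cong[OF refl], rule inner) simp
  also have "\<dots> = (\<Sum>j\<le>m+n. \<Sum>k\<le>m. if j \<le> n+k then smul (g k j) (E j) else 0)"
    by (rule sum.swap)
  also have "\<dots> = (\<Sum>j\<le>m+n. smul (\<Sum>k\<le>m. if j \<le> n+k then g k j else 0) (E j))"
    by (simp add: m.scale_sum_left if_distrib[of "\<lambda>c. smul c _"] cong: if_cong)
  also have "\<dots> = (\<Sum>j\<le>m+n. smul (if m \<le> j then co n (m+n-j) m else 0) (E j))"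
  proof (rule sum.cong[OF refl])
    fix j assume "j \<in> {..m+n}"
    then have j: "j \<le> m+n" by simp
    have "(\<Sum>k\<le>m. if j \<le> n+k then g k j else 0) = (if m \<le> j then co n (m+n-j) m else 0)"
      unfolding g_def by (rule S2[OF j])
    then show "smul (\<Sum>k\<le>m. if j \<le> n+k then g k j else 0) (E j) = smul (if m \<le> j then co n (m+n-j) m else 0) (E j)"
      by simp
  qed
  also have "\<dots> = (\<Sum>i\<le>m+n. smul (if m \<le> m+n-i then co n (m+n-(m+n-i)) m else 0) (E (m+n-i)))"
    by (rule sum_atMost_rev)
  also have "\<dots> = (\<Sum>i\<le>m+n. if i \<le> n then smul (co n i m) (br (a i) (b (m + (n-i)))) else 0)"
  proof (rule sum.cong[OF refl])
    fix i assume "i \<in> {..m+n}"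
    then have i: "i \<le> m+n" by simp
    show "smul (if m \<le> m+n-i then co n (m+n-(m+n-i)) m else 0) (E (m+n-i))
        = (if i \<le> n then smul (co n i m) (br (a i) (b (m + (n-i)))) else 0)"
      using i by (auto simp: E_def)
  qed
  also have "\<dots> = op n a b m"
    by (simp add: ps_op_co sum_atMost_extend[of n "m+n", symmetric])
  finally show ?thesis by simp
qed

lemma ax_ii:
  assumes a: "a \<in> W p" and b: "b \<in> W q"
  shows "ps_has_sum (\<lambda>k. S (psign (p * q) * (-1) ^ (n + k + 1) / fact k) ((ps_T ^^ k) (op (n + k) b a))) (op n a b)"
  unfolding ps_has_sum_def
proof
  fix m
  let ?c = "\<lambda>k. S (psign (p * q) * (-1) ^ (n + k + 1) / fact k) ((ps_T ^^ k) (op (n + k) b a)) m"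
  have sub: "{k. ?c k \<noteq> 0} \<subseteq> {..m}" by (auto simp: ps_smul_def Tpow split: if_splits)
  then have fin: "finite {k. ?c k \<noteq> 0}" using finite_subset by blast
  have "(\<Sum>k | ?c k \<noteq> 0. ?c k) = (\<Sum>k\<le>m. ?c k)"
    by (rule sum.mono_neutral_left) (use sub in auto)
  also have "\<dots> = (\<Sum>k\<le>m. smul (psign (p*q) * (-1)^(n+k+1) / fact k) (op (n+k) b a (m-k)))"
    by (rule sum.cong) (simp_all add: ps_smul_def Tpow)
  also have "\<dots> = op n a b m" by (rule skew_coeff[OF a b, symmetric])
  finally show "finite {k. ?c k \<noteq> 0} \<and> op n a b m = (\<Sum>k | ?c k \<noteq> 0. ?c k)" using fin by simp
qed

end

lemma reidx_inner:
  fixes G :: "nat \<Rightarrow> 'a::comm_monoid_add"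
  assumes "i \<le> k" "k \<le> m"
  shows "(\<Sum>j\<le>m+n. if k-i \<le> j \<and> j+i \<le> m+n then G j else 0) = (\<Sum>u\<le>m+n-k. G (u + (k-i)))"
proof -
  have "(\<Sum>j\<le>m+n. if k-i \<le> j \<and> j+i \<le> m+n then G j else 0) = (\<Sum>j\<in>{k-i..m+n-i}. G j)"
    by (rule sum.mono_neutral_cong_right) (use assms in auto)
  also have "{k-i..m+n-i} = {0+(k-i)..(m+n-k)+(k-i)}" using assms by auto
  also have "(\<Sum>j\<in>{0+(k-i)..(m+n-k)+(k-i)}. G j) = (\<Sum>u\<in>{0..m+n-k}. G (u + (k-i)))"
    by (rule sum.shift_bounds_cl_nat_ivl)
  finally show ?thesis by (simp add: atLeast0AtMost)
qed

lemma reidx: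
  fixes \<Phi> :: "nat \<Rightarrow> nat \<Rightarrow> nat \<Rightarrow> 'a::comm_monoid_add"
  shows "(\<Sum>k\<le>m. \<Sum>u\<le>m+n-k. \<Sum>i\<le>k. \<Phi> k u i)
    = (\<Sum>i\<le>m. \<Sum>j\<le>m+n. \<Sum>k\<le>m. if i \<le> k \<and> k-i \<le> j \<and> j+i \<le> m+n then \<Phi> k (j-(k-i)) i else 0)"
proof -
  have "(\<Sum>i\<le>m. \<Sum>j\<le>m+n. \<Sum>k\<le>m. if i \<le> k \<and> k-i \<le> j \<and> j+i \<le> m+n then \<Phi> k (j-(k-i)) i else 0)
      = (\<Sum>i\<le>m. \<Sum>k\<le>m. \<Sum>j\<le>m+n. if i \<le> k \<and> k-i \<le> j \<and> j+i \<le> m+n then \<Phi> k (j-(k-i)) i else 0)"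
    by (rule sum.cong[OF refl], rule sum.swap)
  also have "\<dots> = (\<Sum>k\<le>m. \<Sum>i\<le>m. \<Sum>j\<le>m+n. if i \<le> k \<and> k-i \<le> j \<and> j+i \<le> m+n then \<Phi> k (j-(k-i)) i else 0)"
    by (rule sum.swap)
  also have "\<dots> = (\<Sum>k\<le>m. \<Sum>u\<le>m+n-k. \<Sum>i\<le>k. \<Phi> k u i)"
  proof (rule sum.cong[OF refl])
    fix k assume "k \<in> {..m}"
    then have k: "k \<le> m" by simp
    have "(\<Sum>i\<le>m. \<Sum>j\<le>m+n. if i \<le> k \<and> k-i \<le> j \<and> j+i \<le> m+n then \<Phi> k (j-(k-i)) i else 0)
       = (\<Sum>i\<le>k. \<Sum>j\<le>m+n. if k-i \<le> j \<and> j+i \<le> m+n then \<Phi> k (j-(k-i)) i else 0)"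
      by (rule sum.mono_neutral_cong_right) (use k in auto)
    also have "\<dots> = (\<Sum>i\<le>k. \<Sum>u\<le>m+n-k. \<Phi> k u i)"
    proof (rule sum.cong[OF refl])
      fix i assume "i \<in> {..k}"
      then have i: "i \<le> k" by simp
      show "(\<Sum>j\<le>m+n. if k-i \<le> j \<and> j+i \<le> m+n then \<Phi> k (j-(k-i)) i else 0) = (\<Sum>u\<le>m+n-k. \<Phi> k u i)"
        using reidx_inner[OF i k, of n "\<lambda>j. \<Phi> k (j-(k-i)) i"] by simp
    qed
    also have "\<dots> = (\<Sum>u\<le>m+n-k. \<Sum>i\<le>k. \<Phi> k u i)" by (rule sum.swap)
    finally show "(\<Sum>i\<le>m. \<Sum>j\<le>m+n. if i \<le> k \<and> k-i \<le> j \<and> j+i \<le> m+n then \<Phi> k (j-(k-i)) i else 0)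
       = (\<Sum>u\<le>m+n-k. \<Sum>i\<le>k. \<Phi> k u i)" .
  qed
  finally show ?thesis by simp
qed

context dgl begin

lemma opop: "op m a (op n b c) r = (\<Sum>i\<le>m. \<Sum>j\<le>n. smul (co m i r * co n j (r+(m-i))) (br (a i) (br (b j) (c (r+(m-i)+(n-j))))))"
  by (simp add: ps_op_co br2.sum m.scale_sum_right br_smul2)

lemma opop2: "op (m+n-k) (op k a b) c r = (\<Sum>u\<le>m+n-k. \<Sum>i\<le>k. smul (co (m+n-k) u r * co k i u) (br (br (a i) (b (u+(k-i)))) (c (r+(m+n-k-u)))))"
  by (simp add: ps_op_co br1.sum m.scale_sum_right br_smul1)

end

context dgl begin

lemma comm_coeff:
  assumes a: "a \<in> W p" and b: "b \<in> W q"
  shows "(op m a (op n b c) - S (psign (p*q)) (op n b (op m a c))) r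
     = (\<Sum>k\<le>m. S (of_nat (m choose k)) (op (m+n-k) (op k a b) c)) r"
proof -
  let ?s = "psign (p*q) :: 'k"
  define K where "K i j = (co m i r * co n j (r+(m-i)) :: 'k)" for i j
  define F where "F i j = br (br (a i) (b j)) (c (r+(m+n-i-j)))" for i j
  have jac': "br (a i) (br (b j) z) - smul ?s (br (b j) (br (a i) z)) = br (br (a i) (b j)) z" for i j z
    using jac[of "a i" p "b j" q z] a b by (simp add: W_iff)
  have symK: "co n j r * co m i (r+(n-j)) = (K i j :: 'k)" for i j
    unfolding K_def co_def by (simp add: field_simps ac_simps)
  have L: "(op m a (op n b c) - S ?s (op n b (op m a c))) r
      = (\<Sum>i\<le>m. \<Sum>j\<le>n. smul (K i j) (br (br (a i) (b j)) (c (r+(m-i)+(n-j)))))"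
  proof -
    have e1: "op m a (op n b c) r = (\<Sum>i\<le>m. \<Sum>j\<le>n. smul (K i j) (br (a i) (br (b j) (c (r+(m-i)+(n-j))))))"
      by (simp only: opop K_def)
    have idx: "r+(n-j)+(m-i) = r+(m-i)+(n-j)" for i j by simp
    have e2: "op n b (op m a c) r = (\<Sum>j\<le>n. \<Sum>i\<le>m. smul (K i j) (br (b j) (br (a i) (c (r+(m-i)+(n-j))))))"
      by (simp only: opop symK idx)
    have "(op m a (op n b c) - S ?s (op n b (op m a c))) r
       = (\<Sum>i\<le>m. \<Sum>j\<le>n. smul (K i j) (br (a i) (br (b j) (c (r+(m-i)+(n-j))))))
         - smul ?s (\<Sum>j\<le>n. \<Sum>i\<le>m. smul (K i j) (br (b j) (br (a i) (c (r+(m-i)+(n-j))))))"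
      by (simp only: minus_apply ps_smul_def e1 e2)
    also have "\<dots> = (\<Sum>i\<le>m. \<Sum>j\<le>n. smul (K i j) (br (a i) (br (b j) (c (r+(m-i)+(n-j))))))
         - (\<Sum>i\<le>m. \<Sum>j\<le>n. smul (K i j) (smul ?s (br (b j) (br (a i) (c (r+(m-i)+(n-j)))))))"
    proof -
      have "(\<Sum>j\<le>n. \<Sum>i\<le>m. smul (K i j) (br (b j) (br (a i) (c (r+(m-i)+(n-j))))))
         = (\<Sum>i\<le>m. \<Sum>j\<le>n. smul (K i j) (br (b j) (br (a i) (c (r+(m-i)+(n-j))))))"
        by (rule sum.swap)
      then show ?thesis by (simp only: m.scale_sum_right m.scale_left_commute[of ?s])
    qed
    also have "\<dots> = (\<Sum>i\<le>m. \<Sum>j\<le>n. smul (K i j) (br (br (a i) (b j)) (c (r+(m-i)+(n-j)))))"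
      by (simp only: sum_subtractf[symmetric] m.scale_right_diff_distrib[symmetric] jac')
    finally show ?thesis .
  qed
  define \<Phi> where "\<Phi> k u i = smul (of_nat (m choose k) * co (m+n-k) u r * co k i u) (br (br (a i) (b (u+(k-i)))) (c (r+(m+n-k-u))))" for k u i
  have "(\<Sum>k\<le>m. S (of_nat (m choose k)) (op (m+n-k) (op k a b) c)) r
     = (\<Sum>k\<le>m. \<Sum>u\<le>m+n-k. \<Sum>i\<le>k. \<Phi> k u i)"
    by (simp add: sum_fun_apply ps_smul_def opop2 m.scale_sum_right \<Phi>_def mult.assoc)
  also have "\<dots> = (\<Sum>i\<le>m. \<Sum>j\<le>m+n. \<Sum>k\<le>m. if i \<le> k \<and> k-i \<le> j \<and> j+i \<le> m+n then \<Phi> k (j-(k-i)) i else 0)"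
    by (rule reidx)
  also have "\<dots> = (\<Sum>i\<le>m. \<Sum>j\<le>m+n. smul (\<Sum>k\<le>m. if i \<le> k \<and> k-i \<le> j \<and> j+i \<le> m+n then
        of_nat (m choose k) * co (m+n-k) (j-(k-i)) r * co k i (j-(k-i)) else 0) (F i j))"
  proof (intro sum.cong refl)
    fix i j assume "i \<in> {..m}" "j \<in> {..m+n}"
    have "(if i \<le> k \<and> k-i \<le> j \<and> j+i \<le> m+n then \<Phi> k (j-(k-i)) i else 0)
       = smul (if i \<le> k \<and> k-i \<le> j \<and> j+i \<le> m+n then
        of_nat (m choose k) * co (m+n-k) (j-(k-i)) r * co k i (j-(k-i)) else 0) (F i j)" for k
    proof (cases "i \<le> k \<and> k-i \<le> j \<and> j+i \<le> m+n")
      case True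
      then have e1: "j - (k - i) + (k - i) = j" "m + n - k - (j - (k - i)) = m+n-i-j" by auto
      show ?thesis using True unfolding \<Phi>_def F_def e1 by simp
    next
      case False
      show ?thesis by (simp only: if_not_P[OF False] m.scale_zero_left)
    qed
    then show "(\<Sum>k\<le>m. if i \<le> k \<and> k-i \<le> j \<and> j+i \<le> m+n then \<Phi> k (j-(k-i)) i else 0)
      = smul (\<Sum>k\<le>m. if i \<le> k \<and> k-i \<le> j \<and> j+i \<le> m+n then
        of_nat (m choose k) * co (m+n-k) (j-(k-i)) r * co k i (j-(k-i)) else 0) (F i j)"
      by (simp add: m.scale_sum_left)
  qed
  also have "\<dots> = (\<Sum>i\<le>m. \<Sum>j\<le>m+n. if j \<le> n then smul (K i j) (F i j) else 0)"
    by (intro sum.cong refl) (simp add: S3 K_def)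
  also have "\<dots> = (\<Sum>i\<le>m. \<Sum>j\<le>n. smul (K i j) (F i j))"
    by (rule sum.cong[OF refl], rule sum_atMost_extend[symmetric]) simp
  also have "\<dots> = (\<Sum>i\<le>m. \<Sum>j\<le>n. smul (K i j) (br (br (a i) (b j)) (c (r+(m-i)+(n-j)))))"
  proof (intro sum.cong refl)
    fix i j assume "i \<in> {..m}" "j \<in> {..n}"
    then have e: "r + (m+n-i-j) = r+(m-i)+(n-j)" by auto
    show "smul (K i j) (F i j) = smul (K i j) (br (br (a i) (b j)) (c (r+(m-i)+(n-j))))"
      unfolding F_def e ..
  qed
  finally show ?thesis using L by simp
qed

end

theorem lemma4p30:
  fixes smul :: "'k::field_char_0 \<Rightarrow> 'v::ab_group_add \<Rightarrow> 'v"
    and L :: "int \<Rightarrow> 'v set" and d :: "'v \<Rightarrow> 'v" and br :: "'v \<Rightarrow> 'v \<Rightarrow> 'v"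
  assumes "dg_Lie_algebra smul L d br"
  shows "dg_vertex_Lie_axioms (ps_smul smul) (ps_carrier L) (ps_grading L) (ps_d d) ps_T
           (ps_op smul br) ps_has_sum
       \<and> (\<forall>a\<in>ps_carrier L. \<forall>b\<in>ps_carrier L. finite {i. a i \<noteq> 0} \<longrightarrow> finite {j. b j \<noteq> 0} \<longrightarrow>
            finite {n. ps_op smul br n a b \<noteq> 0})"
proof -
  interpret dgl smul L d br by (rule dgl.intro) (rule assms)
  have comm: "ps_op smul br m a (ps_op smul br n b c) - ps_smul smul (psign (p * q)) (ps_op smul br n b (ps_op smul br m a c))
      = (\<Sum>i\<le>m. ps_smul smul (of_nat (m choose i)) (ps_op smul br (m + n - i) (ps_op smul br i a b) c))"
    if "a \<in> ps_grading L p" "b \<in> ps_grading L q" for m n p q a b c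
    using comm_coeff[OF that] by (simp add: fun_eq_iff)
  show ?thesis
    unfolding dg_vertex_Lie_axioms_def
    by (intro conjI allI ballI impI)
       (assumption | rule graded_ps lin_D D_deg DD lin_T T_deg TD lin_op2 lin_op1 op_deg ax_i ax_ii comm ax_iv locality)+
qed

end
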